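(* For every integer $j\ge0$, $$\int_0^\infty\frac{(\pi^2+t^2)^j}{e^t-1}\sin\!\left(2j\tan^{-1}\!\left(\frac t\pi\right)\right)dt=\frac{j\,\pi^{2j+1}}{2j+1}.$$ *)

theory Defs
  imports "HOL-Analysis.Analysis"
begin

end

theory Submission
  imports Defs "HOL-Complex_Analysis.Complex_Analysis" "HOL-Real_Asymp.Real_Asymp"
begin

definition NN :: "nat \<Rightarrow> complex \<Rightarrow> complex" where
  "NN j w = w^(2*j) - of_real (pi^(2*j))"
definition DD :: "complex \<Rightarrow> complex" where
  "DD w = 1 + exp (-(\<i>*w))"
definition hh :: "nat \<Rightarrow> complex \<Rightarrow> complex" where
  "hh j w = (if w = of_real pi then of_nat (2*j) * (of_real pi)^(2*j-1) / \<i>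
             else if w = - of_real pi then of_nat (2*j) * (- of_real pi)^(2*j-1) / \<i>
             else NN j w / DD w)"
definition SS :: "complex set" where
  "SS = {w. Re w > -2*pi} \<inter> {w. Re w < 2*pi}"

lemma ratio_limit:
  fixes N D :: "complex \<Rightarrow> complex"
  assumes "(N has_field_derivative a) (at z)" "(D has_field_derivative b) (at z)"
    "N z = 0" "D z = 0" "b \<noteq> 0"
  shows "((\<lambda>w. N w / D w) \<longlongrightarrow> a / b) (at z)"
proof -
  have 1: "((\<lambda>y. (N y - N z) / (y - z)) \<longlongrightarrow> a) (at z)"
    using assms(1) by (simp add: has_field_derivative_iff)
  have 2: "((\<lambda>y. (D y - D z) / (y - z)) \<longlongrightarrow> b) (at z)"
    using assms(2) by (simp add: has_field_derivative_iff)
  have 3: "((\<lambda>y. ((N y - N z) / (y - z)) / ((D y - D z) / (y - z))) \<longlongrightarrow> a / b) (at z)"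
    using tendsto_divide[OF 1 2 assms(5)] .
  show ?thesis
  proof (rule Lim_transform_eventually[OF 3])
    show "\<forall>\<^sub>F y in at z. (N y - N z) / (y - z) / ((D y - D z) / (y - z)) = N y / D y"
      unfolding eventually_at_filter
      by (rule always_eventually) (auto simp: assms)
  qed
qed

lemma DD_zero:
  assumes "w \<in> SS" "DD w = 0"
  shows "w = of_real pi \<or> w = - of_real pi"
proof -
  have e: "exp (-(\<i>*w)) = -1" using assms(2) unfolding DD_def
    by (simp add: add_eq_0_iff)
  have e2: "exp (\<i>*w) = -1"
  proof -
    have "exp(\<i>*w) = inverse (exp (-(\<i>*w)))" by (simp add: exp_minus)
    also have "\<dots> = -1" using e by simp
    finally show ?thesis .
  qed
  have "exp (-(\<i>*w) + \<i> * of_real pi) = 1"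
    by (simp add: exp_diff e2)
  then obtain n :: int where im: "Im w = 0" and n: "- Re w + pi = real_of_int (2*n) * pi"
    by (auto simp: exp_eq_1)
  have r: "Re w = pi * (1 - 2 * real_of_int n)" using n by (simp add: algebra_simps)
  have "pi * (-2) < pi * (1 - 2 * real_of_int n)" "pi * (1 - 2 * real_of_int n) < pi * 2"
    using assms(1) r by (auto simp: SS_def)
  then have "-2 < (1 - 2 * real_of_int n)" "(1 - 2 * real_of_int n) < 2"
    by (simp_all only: mult_less_cancel_left_pos[OF pi_gt_zero])
  then have "n = 0 \<or> n = 1" by linarith
  then have "Re w = pi \<or> Re w = - pi" using r by auto
  then show ?thesis using im by (auto simp: complex_eq_iff)
qed

lemma open_SS: "open SS" and convex_SS: "convex SS"
  unfolding SS_def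
  by (auto intro!: open_Int open_halfspace_Re_gt open_halfspace_Re_lt convex_Int
     convex_halfspace_Re_gt convex_halfspace_Re_lt)

lemma pi_in_SS: "of_real pi \<in> SS" "- of_real pi \<in> SS"
  by (auto simp: SS_def)

lemma exp_ipi: "exp (-(\<i> * of_real pi)) = -1" "exp (-(\<i> * - of_real pi)) = -1"
  by (simp_all add: exp_minus)

lemma hh_holo: "hh j holomorphic_on SS"
proof (rule no_isolated_singularity'[where K = "{of_real pi, - of_real pi}"])
  show "open SS" by (rule open_SS)
  show "finite {complex_of_real pi, - complex_of_real pi}" by simp
  have "(\<lambda>w. NN j w / DD w) holomorphic_on (SS - {of_real pi, - of_real pi})"
    unfolding NN_def DD_def
    by (intro holomorphic_intros) (use DD_zero in \<open>auto simp: DD_def\<close>)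
  then show "hh j holomorphic_on (SS - {of_real pi, - of_real pi})"
    by (rule holomorphic_transform) (auto simp: hh_def)
  have dN: "(NN j has_field_derivative of_nat (2*j) * z^(2*j-1)) (at z)" for z
    unfolding NN_def by (auto intro!: derivative_eq_intros)
  have dD: "(DD has_field_derivative exp (-(\<i>*z)) * (-\<i>)) (at z)" for z
    unfolding DD_def by (auto intro!: derivative_eq_intros)
  have ev: "\<forall>\<^sub>F w in at z. NN j w / DD w = hh j w" if "z = of_real pi \<or> z = - of_real pi" for z
  proof -
    have "\<forall>\<^sub>F w in at z. w \<noteq> of_real pi \<and> w \<noteq> - of_real pi"
      using that by (auto intro!: eventually_conj eventually_neq_at_within)
    then show ?thesis by eventually_elim (auto simp: hh_def)
  qed
  fix z assume z: "z \<in> {complex_of_real pi, - complex_of_real pi}"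
  show "(hh j \<longlongrightarrow> hh j z) (at z within SS)"
  proof (rule Lim_at_imp_Lim_at_within)
    from z show "(hh j \<longlongrightarrow> hh j z) (at z)"
    proof
      assume zp: "z = of_real pi"
      have "((\<lambda>w. NN j w / DD w) \<longlongrightarrow> (of_nat (2*j) * z^(2*j-1)) / (exp (-(\<i>*z)) * (-\<i>))) (at z)"
        by (rule ratio_limit[OF dN dD]) (auto simp: zp NN_def DD_def power_mult exp_ipi)
      moreover have "(of_nat (2*j) * z^(2*j-1)) / (exp (-(\<i>*z)) * (-\<i>)) = hh j z"
        by (simp add: hh_def zp exp_ipi)
      ultimately have "((\<lambda>w. NN j w / DD w) \<longlongrightarrow> hh j z) (at z)" by simp
      then show ?thesis
        by (rule Lim_transform_eventually) (rule ev, use zp in simp)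
    next
      assume zm: "z \<in> {- of_real pi}"
      then have zm: "z = - of_real pi" by simp
      have "((\<lambda>w. NN j w / DD w) \<longlongrightarrow> (of_nat (2*j) * z^(2*j-1)) / (exp (-(\<i>*z)) * (-\<i>))) (at z)"
        by (rule ratio_limit[OF dN dD]) (auto simp: zm NN_def DD_def power_mult exp_ipi)
      moreover have "(of_nat (2*j) * z^(2*j-1)) / (exp (-(\<i>*z)) * (-\<i>)) = hh j z"
        by (simp add: hh_def zm exp_ipi)
      ultimately have "((\<lambda>w. NN j w / DD w) \<longlongrightarrow> hh j z) (at z)" by simp
      then show ?thesis
        by (rule Lim_transform_eventually) (rule ev, use zm in simp)
    qed
  qed
qed

lemma Im_pow: "Im ((Complex pi t)^(2*j)) = (pi^2+t^2)^j * sin(2*real j*arctan(t/pi))"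
proof -
  define r where "r = sqrt (pi^2+t^2)"
  define a where "a = arctan (t/pi)"
  have sq: "sqrt (pi^2+t^2) = pi * sqrt (1 + (t/pi)^2)"
  proof -
    have "pi^2+t^2 = pi^2 * (1 + (t/pi)^2)" by (simp add: field_simps power2_eq_square)
    then have "sqrt (pi^2+t^2) = sqrt (pi^2) * sqrt (1 + (t/pi)^2)" by (simp add: real_sqrt_mult)
    then show ?thesis by simp
  qed
  have pos: "sqrt (1 + (t/pi)^2) > 0" by (simp add: add_pos_nonneg)
  define s where "s = sqrt (1 + (t/pi)^2)"
  have s0: "s \<noteq> 0" using pos by (simp add: s_def)
  have "Re (rcis r a) = pi * s * (1 / s)" unfolding r_def a_def s_def sq by (simp add: cos_arctan)
  also have "\<dots> = pi" using s0 by simp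
  finally have re: "Re (rcis r a) = pi" .
  have "Im (rcis r a) = pi * s * ((t/pi) / s)" unfolding r_def a_def s_def sq by (simp add: sin_arctan)
  also have "\<dots> = t" using s0 by simp
  finally have im: "Im (rcis r a) = t" .
  have "Complex pi t = rcis r a"
    using re im by (simp add: complex_eq_iff)
  then have "(Complex pi t)^(2*j) = rcis (r^(2*j)) (real (2*j) * a)"
    by (simp add: DeMoivre2)
  then have "Im ((Complex pi t)^(2*j)) = r^(2*j) * sin (real (2*j) * a)" by simp
  also have "r^(2*j) = (pi^2+t^2)^j"
    unfolding r_def by (simp add: power_mult add_nonneg_nonneg)
  finally show ?thesis by (simp add: a_def)
qed

lemma DD_vert: "DD (Complex pi t) = of_real (1 - exp t)" "DD (Complex (-pi) t) = of_real (1 - exp t)"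
proof -
  have "-(\<i> * Complex c t) = of_real t + (-(\<i> * of_real c))" for c
    by (simp add: complex_eq_iff)
  then show "DD (Complex pi t) = of_real (1 - exp t)" "DD (Complex (-pi) t) = of_real (1 - exp t)"
    unfolding DD_def by (simp_all add: exp_add exp_diff exp_of_real)
qed

definition ff :: "nat \<Rightarrow> real \<Rightarrow> real" where
  "ff j t = (pi\<^sup>2 + t\<^sup>2) ^ j / (exp t - 1) * sin (2 * real j * arctan (t / pi))"

lemma vert_diff:
  assumes "t > 0"
  shows "hh j (Complex pi t) - hh j (Complex (-pi) t) = -2*\<i> * of_real (ff j t)"
proof -
  have ne: "Complex pi t \<noteq> of_real pi" "Complex pi t \<noteq> - of_real pi"
     "Complex (-pi) t \<noteq> of_real pi" "Complex (-pi) t \<noteq> - of_real pi"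
    using assms by (auto simp: complex_eq_iff)
  have e: "1 - exp t \<noteq> 0" using assms by simp
  have m: "Complex (-pi) t = - cnj (Complex pi t)" by (simp add: complex_eq_iff)
  define W where "W = (Complex pi t)^(2*j)"
  have NNm: "NN j (Complex (-pi) t) = cnj W - of_real (pi^(2*j))"
    unfolding NN_def W_def m by (simp add: power_mult)
  have h1: "hh j (Complex pi t) = (W - of_real (pi^(2*j))) / of_real (1 - exp t)"
    using ne by (simp add: hh_def DD_vert NN_def W_def)
  have h2: "hh j (Complex (-pi) t) = (cnj W - of_real (pi^(2*j))) / of_real (1 - exp t)"
    using ne by (simp add: hh_def DD_vert NNm)
  have "hh j (Complex pi t) - hh j (Complex (-pi) t) = (W - cnj W) / of_real (1 - exp t)"
    unfolding h1 h2 by (simp add: diff_divide_distrib)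
  also have "\<dots> = of_real (2 * Im W) * \<i> / of_real (1 - exp t)" by (simp add: complex_diff_cnj)
  also have "\<dots> = -2*\<i> * of_real (ff j t)"
  proof -
    have e': "exp t - 1 \<noteq> 0" using e by simp
    have "ff j t = Im W / (exp t - 1)" unfolding ff_def W_def Im_pow by simp
    then have ffe: "of_real (ff j t) = of_real (Im W) / (of_real (exp t) - (1::complex))" by simp
    have gen: "\<And>(e::complex) x. e - 1 \<noteq> 0 \<Longrightarrow> of_real (2*x) * \<i> / (1 - e) = -2*\<i> * (of_real x / (e - 1))"
    proof -
      fix e :: complex and x assume h: "e - 1 \<noteq> 0"
      have "1 - e = -(e - 1)" by simp
      then show "of_real (2*x) * \<i> / (1 - e) = -2*\<i> * (of_real x / (e - 1))" using h by (simp add: field_simps)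
    qed
    have ne1: "(of_real (exp t) :: complex) - 1 \<noteq> 0" using e' by (metis of_real_1 of_real_diff of_real_eq_0_iff)
    show ?thesis unfolding ffe of_real_diff of_real_1 by (rule gen[OF ne1])
  qed
  finally show ?thesis .
qed

lemma bottom_sum:
  assumes "-pi < x" "x < pi"
  shows "hh j (of_real x) + hh j (- of_real x) = of_real (x^(2*j) - pi^(2*j))"
proof -
  have ne: "of_real x \<noteq> (of_real pi :: complex)" "of_real x \<noteq> - (of_real pi :: complex)"
    "- of_real x \<noteq> (of_real pi :: complex)" "- of_real x \<noteq> - (of_real pi :: complex)"
    using assms by (auto simp flip: of_real_minus)
  have inS: "of_real x \<in> SS" "- of_real x \<in> SS" using assms by (auto simp: SS_def)
  have d1: "DD (of_real x) \<noteq> 0" using DD_zero[OF inS(1)] ne by auto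
  have d2: "DD (- of_real x) \<noteq> 0" using DD_zero[OF inS(2)] ne by auto
  define a where "a = exp (-(\<i> * of_real x))"
  define b where "b = exp (\<i> * of_real x)"
  have ab: "a * b = 1" unfolding a_def b_def by (simp flip: exp_add)
  have d1': "1 + a \<noteq> 0" using d1 by (simp add: DD_def a_def)
  have d2': "1 + b \<noteq> 0" using d2 by (simp add: DD_def b_def)
  have NNs: "NN j (- of_real x) = NN j (of_real x)" by (simp add: NN_def power_mult)
  have "hh j (of_real x) + hh j (- of_real x) = NN j (of_real x) / (1 + a) + NN j (of_real x) / (1 + b)"
    using ne by (simp add: hh_def NNs DD_def a_def b_def)
  also have "\<dots> = NN j (of_real x) * ((2 + a + b) / (1 + a + b + a * b))"
    using d1' d2' by (simp add: field_simps)
  also have "\<dots> = NN j (of_real x)"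
  proof -
    have "(1 + a) * (1 + b) \<noteq> 0" using d1' d2' by simp
    then have "1 + a + b + a * b \<noteq> 0" by (simp add: algebra_simps)
    moreover have "2 + a + b = 1 + a + b + a * b" using ab by simp
    ultimately show ?thesis by (simp add: add.assoc)
  qed
  finally show ?thesis by (simp add: NN_def)
qed

lemma hh_cont: "continuous_on SS (hh j)"
  using hh_holo holomorphic_on_imp_continuous_on by blast

lemma cont_comp:
  assumes "continuous_on A g" "g ` A \<subseteq> SS"
  shows "continuous_on A (\<lambda>x. hh j (g x))"
  using continuous_on_compose2[OF hh_cont assms(1) assms(2)] .

lemma cont_Complex: "continuous_on A (\<lambda>x. Complex c x)" "continuous_on A (\<lambda>x::real. of_real x :: complex)"
  by (simp_all add: Complex_eq continuous_intros)

lemma real_poly_int: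
  "((\<lambda>x. x^(2*j) - pi^(2*j)) has_integral (2*pi^(2*j+1)/(2*j+1) - 2*pi^(2*j+1))) {-pi..pi}"
proof -
  define F where "F x = x^(2*j+1)/(2*j+1) - pi^(2*j)*x" for x :: real
  have "((\<lambda>x. x^(2*j) - pi^(2*j)) has_integral (F pi - F (-pi))) {-pi..pi}"
  proof (rule fundamental_theorem_of_calculus)
    show "-pi \<le> pi" by simp
    fix x assume "x \<in> {-pi..pi}"
    have "(F has_real_derivative (x^(2*j) - pi^(2*j))) (at x within {-pi..pi})"
      unfolding F_def by (auto intro!: derivative_eq_intros simp del: power_Suc)
    then show "(F has_vector_derivative (x^(2*j) - pi^(2*j))) (at x within {-pi..pi})"
      by (simp add: has_real_derivative_iff_has_vector_derivative)
  qed
  also have "F pi - F (-pi) = 2*pi^(2*j+1)/(2*j+1) - 2*pi^(2*j+1)"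
  proof -
    have o: "(-pi)^(2*j+1) = -(pi^(2*j+1))" by (simp add: power_minus_odd)
    have p: "pi^(2*j) * pi = pi^(2*j+1)" by simp
    show ?thesis unfolding F_def o by (simp add: p algebra_simps diff_divide_distrib add_divide_distrib)
  qed
  finally show ?thesis .
qed

lemma top_bound:
  assumes Y: "Y > 0" and w: "w \<in> closed_segment (Complex pi Y) (Complex (-pi) Y)"
  shows "cmod (hh j w) \<le> ((pi+Y)^(2*j) + pi^(2*j)) / (exp Y - 1)"
proof -
  obtain u where u: "0 \<le> u" "u \<le> 1" "w = (1 - u) *\<^sub>R Complex pi Y + u *\<^sub>R Complex (-pi) Y"
    using w by (auto simp: closed_segment_def)
  have imw: "Im w = Y" unfolding u(3) by (simp add: algebra_simps)
  have rew: "\<bar>Re w\<bar> \<le> pi"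
  proof -
    have "Re w = pi * (1 - 2*u)" unfolding u(3) by (simp add: algebra_simps)
    moreover have "\<bar>1 - 2*u\<bar> \<le> 1" using u by auto
    ultimately show ?thesis by (simp add: abs_mult)
  qed
  have ne: "w \<noteq> of_real pi" "w \<noteq> - of_real pi" using imw Y by auto
  have hw: "hh j w = NN j w / DD w" using ne by (simp add: hh_def)
  have nw: "cmod w \<le> pi + Y"
    using cmod_le[of w] rew imw Y by auto
  have N: "cmod (NN j w) \<le> (pi+Y)^(2*j) + pi^(2*j)"
  proof -
    have "cmod (NN j w) \<le> cmod (w^(2*j)) + cmod (of_real (pi^(2*j)) :: complex)"
      unfolding NN_def by (rule norm_triangle_ineq4)
    also have "cmod (w^(2*j)) = cmod w ^ (2*j)" by (simp add: norm_power)
    also have "cmod w ^ (2*j) \<le> (pi+Y)^(2*j)" by (rule power_mono[OF nw]) simp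
    finally show ?thesis by (simp add: norm_power)
  qed
  have D: "exp Y - 1 \<le> cmod (DD w)"
  proof -
    have "cmod (exp (-(\<i>*w))) - cmod (1::complex) \<le> cmod (exp (-(\<i>*w)) + 1)"
      by (rule norm_diff_ineq)
    moreover have "cmod (exp (-(\<i>*w))) = exp Y" using imw by simp
    ultimately show ?thesis by (simp add: DD_def add.commute)
  qed
  have Dp: "exp Y - 1 > 0" using Y by simp
  have "cmod (hh j w) = cmod (NN j w) / cmod (DD w)" by (simp add: hw norm_divide)
  also have "\<dots> \<le> ((pi+Y)^(2*j) + pi^(2*j)) / (exp Y - 1)"
    by (rule frac_le[OF _ N Dp D]) simp
  finally show ?thesis .
qed

lemma bottom_int:
  "((\<lambda>x. hh j (of_real x)) has_integral of_real (pi^(2*j+1)/(2*j+1) - pi^(2*j+1))) {-pi..pi}"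
proof -
  have c: "continuous_on {-pi..pi} (\<lambda>x. hh j (of_real x))"
    by (rule cont_comp[OF cont_Complex(2)]) (auto simp: SS_def; smt (verit) pi_gt_zero)
  then have "(\<lambda>x. hh j (of_real x)) integrable_on {-pi..pi}"
    by (rule integrable_continuous_real)
  then obtain I0 where I0: "((\<lambda>x. hh j (of_real x)) has_integral I0) {-pi..pi}"
    by blast
  have "((\<lambda>x. hh j (of_real (-x))) has_integral I0) {-pi..-(-pi)}"
    by (rule has_integral_reflect_real[of "\<lambda>x. hh j (of_real x)", THEN iffD2, OF I0])
  then have I0r: "((\<lambda>x. hh j (- of_real x)) has_integral I0) {-pi..pi}" by simp
  have s: "((\<lambda>x. hh j (of_real x) + hh j (- of_real x)) has_integral (I0 + I0)) {-pi..pi}"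
    by (rule has_integral_add[OF I0 I0r])
  have r: "((\<lambda>x. of_real (x^(2*j) - pi^(2*j)) :: complex) has_integral
            of_real (2*pi^(2*j+1)/(2*j+1) - 2*pi^(2*j+1))) {-pi..pi}"
    by (rule has_integral_linear[OF real_poly_int bounded_linear_of_real, unfolded o_def])
  have r': "((\<lambda>x. hh j (of_real x) + hh j (- of_real x)) has_integral
            of_real (2*pi^(2*j+1)/(2*j+1) - 2*pi^(2*j+1))) {-pi..pi}"
  proof (rule has_integral_spike[OF _ _ r])
    show "negligible {-pi, pi}" by auto
    fix x assume "x \<in> {-pi..pi} - {-pi, pi}"
    then have "-pi < x" "x < pi" by auto
    then show "hh j (of_real x) + hh j (- of_real x) = of_real (x^(2*j) - pi^(2*j))"
      using bottom_sum by simp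
  qed
  have "I0 + I0 = of_real (2*pi^(2*j+1)/(2*j+1) - 2*pi^(2*j+1))"
    using has_integral_unique[OF s r'] .
  then have "I0 = of_real (pi^(2*j+1)/(2*j+1) - pi^(2*j+1))"
    by (simp add: complex_eq_iff)
  then show ?thesis using I0 by simp
qed

lemma vert_int:
  assumes that: "c = pi \<or> c = -pi"
  shows "\<exists>R. ((\<lambda>x. hh j (Complex c x)) has_integral R) {0..Y}"
proof -
  have "continuous_on {0..Y} (\<lambda>x. hh j (Complex c x))"
    by (rule cont_comp[OF cont_Complex(1)]) (use that in \<open>auto simp: SS_def\<close>)
  then have "(\<lambda>x. hh j (Complex c x)) integrable_on {0..Y}"
    by (rule integrable_continuous_real)
  then show ?thesis by blast
qed

lemma rect:
  assumes Y: "Y > 0"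
  shows "\<exists>T. cmod T \<le> 2*pi*(((pi+Y)^(2*j)+pi^(2*j))/(exp Y - 1)) \<and>
             (ff j has_integral (real j * pi^(2*j+1)/(2*real j+1) - Re T/2)) {0..Y}"
proof -
  define a1 where "a1 = Complex (-pi) 0"
  define a2 where "a2 = Complex pi 0"
  define a3 where "a3 = Complex pi Y"
  define a4 where "a4 = Complex (-pi) Y"
  define B where "B = ((pi+Y)^(2*j)+pi^(2*j))/(exp Y - 1)"
  have rp: "rectpath a1 a3 = linepath a1 a2 +++ linepath a2 a3 +++ linepath a3 a4 +++ linepath a4 a1"
    by (simp add: rectpath_def Let_def a1_def a2_def a3_def a4_def)
  define I0 where "I0 = complex_of_real (pi^(2*j+1)/(2*j+1) - pi^(2*j+1))"
  have a1r: "a1 = - of_real pi" "a2 = of_real pi" by (simp_all add: a1_def a2_def complex_eq_iff)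
  have bot: "(hh j has_contour_integral I0) (linepath a1 a2)"
    using has_contour_integral_linepath_Reals_iff[of a1 a2 "hh j" I0] bottom_int[of j]
    by (simp add: a1r I0_def)
  obtain R where R: "((\<lambda>x. hh j (Complex pi x)) has_integral R) {0..Y}"
    using vert_int[of pi] by blast
  obtain L where L: "((\<lambda>x. hh j (Complex (-pi) x)) has_integral L) {0..Y}"
    using vert_int[of "-pi"] by blast
  have right: "(hh j has_contour_integral (\<i>*R)) (linepath a2 a3)"
    by (rule has_contour_integral_linepath_same_Re_iff[of a2 pi a3 0 Y, THEN iffD2])
       (use Y R in \<open>simp_all add: a2_def a3_def\<close>)
  have left0: "(hh j has_contour_integral (\<i>*L)) (linepath a1 a4)"
    by (rule has_contour_integral_linepath_same_Re_iff[of a1 "-pi" a4 0 Y, THEN iffD2])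
       (use Y L in \<open>simp_all add: a1_def a4_def\<close>)
  have left: "(hh j has_contour_integral (-(\<i>*L))) (linepath a4 a1)"
    using has_contour_integral_reversepath[OF _ left0] by simp
  have inS: "a1 \<in> SS" "a2 \<in> SS" "a3 \<in> SS" "a4 \<in> SS"
    by (auto simp: SS_def a1_def a2_def a3_def a4_def)
  have seg: "closed_segment a3 a4 \<subseteq> SS"
    by (rule closed_segment_subset[OF inS(3) inS(4) convex_SS])
  define T where "T = contour_integral (linepath a3 a4) (hh j)"
  have top: "(hh j has_contour_integral T) (linepath a3 a4)"
    unfolding T_def
    by (rule has_contour_integral_integral, rule contour_integrable_continuous_linepath,
        rule continuous_on_subset[OF hh_cont seg])
  have Tb: "cmod T \<le> B * cmod (a4 - a3)"
  proof (rule has_contour_integral_bound_linepath[OF top])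
    show "0 \<le> B" unfolding B_def using Y by (intro divide_nonneg_pos add_nonneg_nonneg) auto
    fix w assume "w \<in> closed_segment a3 a4"
    then show "cmod (hh j w) \<le> B" unfolding B_def a3_def a4_def by (rule top_bound[OF Y])
  qed
  have "a4 - a3 = - of_real (2*pi)" by (simp add: a3_def a4_def complex_eq_iff)
  then have d34: "cmod (a4 - a3) = 2*pi" by (simp only: norm_minus_cancel norm_of_real) simp
  have all: "(hh j has_contour_integral (I0 + (\<i>*R + (T + -(\<i>*L))))) (rectpath a1 a3)"
    unfolding rp
    by (intro has_contour_integral_join bot right top left valid_path_join valid_path_linepath)
       simp_all
  have pim: "path_image (rectpath a1 a3) \<subseteq> SS"
  proof -
    have le: "Re a1 \<le> Re a3" "Im a1 \<le> Im a3" using Y by (simp_all add: a1_def a3_def)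
    have "z \<in> SS" if z: "z \<in> path_image (rectpath a1 a3)" for z
    proof -
      have "Re z \<in> {Re a1..Re a3}" using z le
        by (subst (asm) path_image_rectpath) auto
      then have "-pi \<le> Re z" "Re z \<le> pi" by (auto simp: a1_def a3_def)
      moreover have "pi > 0" by (rule pi_gt_zero)
      ultimately have "-2*pi < Re z \<and> Re z < 2*pi" by linarith
      then show ?thesis unfolding SS_def by simp
    qed
    then show ?thesis by blast
  qed
  have zero: "(hh j has_contour_integral 0) (rectpath a1 a3)"
    by (rule Cauchy_theorem_convex_simple[OF hh_holo convex_SS valid_path_rectpath pim]) simp
  have sum0: "I0 + (\<i>*R + (T + -(\<i>*L))) = 0"
    using has_contour_integral_unique[OF all zero] .
  have RL: "((\<lambda>x. hh j (Complex pi x) - hh j (Complex (-pi) x)) has_integral (R - L)) {0..Y}"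
    by (rule has_integral_diff[OF R L])
  have RL2: "((\<lambda>x. -2*\<i> * of_real (ff j x)) has_integral (R - L)) {0..Y}"
  proof (rule has_integral_spike[OF _ _ RL])
    show "negligible {0::real}" by auto
    fix x assume "x \<in> {0..Y} - {0}"
    then have "x > 0" by auto
    then show "-2*\<i> * of_real (ff j x) = hh j (Complex pi x) - hh j (Complex (-pi) x)"
      by (simp add: vert_diff)
  qed
  have RL3: "((\<lambda>x. Re (\<i>/2 * (-2*\<i> * of_real (ff j x)))) has_integral Re (\<i>/2 * (R - L))) {0..Y}"
    by (rule has_integral_Re[OF has_integral_mult_right[OF RL2]])
  have e1: "(\<lambda>x. Re (\<i>/2 * (-2*\<i> * of_real (ff j x)))) = ff j" by (simp add: fun_eq_iff)
  have e2: "Re (\<i>/2 * (R - L)) = real j * pi^(2*j+1)/(2*real j+1) - Re T/2"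
  proof -
    have h: "\<i> * (R - L) = - I0 - T" using sum0 by (simp add: algebra_simps add_eq_0_iff)
    have "\<i>/2 * (R - L) = (\<i> * (R - L))/2" by simp
    also have "\<dots> = (- I0 - T)/2" by (simp only: h)
    finally have "Re (\<i>/2 * (R - L)) = Re ((- I0 - T)/2)" by simp
    then have "Re (\<i>/2 * (R - L)) = Re (- I0 - T) / 2" by simp
    also have "\<dots> = (pi^(2*j+1) - pi^(2*j+1)/(2*j+1))/2 - Re T/2"
      by (simp add: I0_def field_simps)
    also have "(pi^(2*j+1) - pi^(2*j+1)/(2*j+1))/2 = real j * pi^(2*j+1)/(2*real j+1)"
      by (simp add: field_simps)
    finally show ?thesis .
  qed
  show ?thesis
    using RL3 Tb unfolding e1 e2 d34 B_def by (intro exI[of _ T]) (simp add: mult.commute)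
qed

lemma poly_exp_bound: "\<exists>C\<ge>1. \<forall>t\<ge>0. (pi^2+t^2)^j \<le> C * exp (t/4)"
proof -
  have "((\<lambda>t::real. (pi+t)^(2*j)/exp(t/4)) \<longlongrightarrow> 0) at_top" by real_asymp
  then have "eventually (\<lambda>t. (pi+t)^(2*j)/exp(t/4) < 1) at_top"
    by (rule order_tendstoD) simp
  then obtain T where T: "\<And>t. t \<ge> T \<Longrightarrow> (pi+t)^(2*j)/exp(t/4) < 1"
    by (auto simp: eventually_at_top_linorder)
  define C where "C = (pi + \<bar>T\<bar>)^(2*j) + 1"
  have C1: "C \<ge> 1" unfolding C_def by simp
  have "(pi^2+t^2)^j \<le> C * exp (t/4)" if t: "t \<ge> 0" for t
  proof -
    have "pi^2+t^2 \<le> (pi+t)^2" using t by (simp add: power2_eq_square algebra_simps)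
    then have "(pi^2+t^2)^j \<le> ((pi+t)^2)^j" by (rule power_mono) simp
    also have "\<dots> = (pi+t)^(2*j)" by (simp add: power_mult)
    also have "\<dots> \<le> C * exp (t/4)"
    proof (cases "t \<ge> T")
      case True
      then have "(pi+t)^(2*j) < exp (t/4)" using T[OF True] by (simp add: divide_less_eq)
      also have "exp (t/4) \<le> C * exp (t/4)" using C1 by simp
      finally show ?thesis by simp
    next
      case False
      then have "pi + t \<le> pi + \<bar>T\<bar>" by simp
      then have "(pi+t)^(2*j) \<le> (pi+\<bar>T\<bar>)^(2*j)" by (rule power_mono) (use t in simp)
      also have "\<dots> \<le> C" unfolding C_def by simp
      also have "C \<le> C * exp (t/4)" using C1 t by simp
      finally show ?thesis .
    qed
    finally show ?thesis .
  qed
  then show ?thesis using C1 by blast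
qed

lemma exp_frac_bound:
  fixes t :: real assumes t: "t > 0" shows "t / (exp t - 1) \<le> 2 * exp (-(t/2))"
proof -
  define s where "s = exp (t/2)"
  have s2: "exp t = s * s" unfolding s_def by (simp flip: exp_add)
  have s1: "s - 1 \<ge> t/2" unfolding s_def using exp_ge_add_one_self[of "t/2"] by linarith
  have spos: "s > 0" unfolding s_def by simp
  have "(t/2) * s \<le> (s - 1) * (s + 1)"
    by (rule mult_mono[OF s1]) (use t spos s1 in auto)
  then have key: "(t/2) * s \<le> exp t - 1" by (simp add: s2 algebra_simps)
  have pos: "(t/2) * s > 0" using t spos by simp
  have "t / (exp t - 1) \<le> t / ((t/2) * s)"
    by (rule divide_left_mono[OF key]) (use t pos in auto)
  also have "\<dots> = 2 / s" using t spos by (simp add: field_simps)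
  also have "\<dots> = 2 * exp (-(t/2))" unfolding s_def by (simp add: exp_minus field_simps)
  finally show ?thesis .
qed

lemma ff_bound: "\<exists>K\<ge>0. \<forall>t\<ge>0. \<bar>ff j t\<bar> \<le> K * exp (-(1/4)*t)"
proof -
  obtain C where C1: "C \<ge> 1" and C: "\<And>t. t \<ge> 0 \<Longrightarrow> (pi^2+t^2)^j \<le> C * exp (t/4)"
    using poly_exp_bound[of j] by blast
  define K where "K = 4 * real j * C / pi"
  have K0: "K \<ge> 0" unfolding K_def using C1 by simp
  have "\<bar>ff j t\<bar> \<le> K * exp (-(1/4)*t)" if t: "t \<ge> 0" for t
  proof (cases "t = 0")
    case True then show ?thesis using K0 by (simp add: ff_def)
  next
    case False
    with t have t: "t > 0" by simp
    have e: "exp t - 1 > 0" using t by simp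
    have sn: "\<bar>sin (2 * real j * arctan (t / pi))\<bar> \<le> 2 * real j * (t/pi)"
    proof -
      have "\<bar>sin (2 * real j * arctan (t / pi))\<bar> \<le> \<bar>2 * real j * arctan (t / pi)\<bar>"
        by (rule abs_sin_x_le_abs_x)
      also have "\<dots> = 2 * real j * \<bar>arctan (t / pi)\<bar>" by (simp add: abs_mult)
      also have "\<dots> \<le> 2 * real j * \<bar>t/pi\<bar>" by (intro mult_left_mono abs_arctan_le) auto
      also have "\<bar>t/pi\<bar> = t/pi" using t by simp
      finally show ?thesis .
    qed
    have P0: "(pi^2+t^2)^j \<ge> 0" by simp
    have "\<bar>ff j t\<bar> = (pi^2+t^2)^j / (exp t - 1) * \<bar>sin (2 * real j * arctan (t / pi))\<bar>"
      unfolding ff_def using e by (simp add: abs_mult)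
    also have "\<dots> \<le> (pi^2+t^2)^j / (exp t - 1) * (2 * real j * (t/pi))"
      by (rule mult_left_mono[OF sn]) (use e in simp)
    also have "\<dots> = (pi^2+t^2)^j * (2 * real j / pi) * (t / (exp t - 1))"
      by (simp add: field_simps)
    also have "\<dots> \<le> (C * exp (t/4)) * (2 * real j / pi) * (2 * exp (-(t/2)))"
      by (intro mult_mono C exp_frac_bound) (use t e C1 in auto)
    also have "\<dots> = K * (exp (t/4) * exp (-(t/2)))" unfolding K_def by (simp add: field_simps)
    also have "exp (t/4) * exp (-(t/2)) = exp (-(1/4)*t)" by (simp flip: exp_add)
    finally show ?thesis .
  qed
  then show ?thesis using K0 by blast
qed

theorem lemma1:
  fixes j :: nat
  shows "((\<lambda>t::real. (pi\<^sup>2 + t\<^sup>2) ^ j / (exp t - 1) * sin (2 * real j * arctan (t / pi)))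
          has_integral (real j * pi ^ (2 * j + 1) / (2 * real j + 1))) {0<..}"
proof -
  define J where "J = real j * pi ^ (2 * j + 1) / (2 * real j + 1)"
  define G where "G Y = pi*(((pi+Y)^(2*j)+pi^(2*j))/(exp Y - 1))" for Y :: real
  obtain K where K0: "K \<ge> 0" and K: "\<And>t. t \<ge> 0 \<Longrightarrow> \<bar>ff j t\<bar> \<le> K * exp (-(1/4)*t)"
    using ff_bound[of j] by blast
  have "\<forall>k::nat. \<exists>T. cmod T \<le> 2*pi*(((pi+real (Suc k))^(2*j)+pi^(2*j))/(exp (real (Suc k)) - 1)) \<and>
             (ff j has_integral (J - Re T/2)) {0..real (Suc k)}"
  proof
    fix k :: nat
    show "\<exists>T. cmod T \<le> 2*pi*(((pi+real (Suc k))^(2*j)+pi^(2*j))/(exp (real (Suc k)) - 1)) \<and>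
             (ff j has_integral (J - Re T/2)) {0..real (Suc k)}"
      using rect[of "real (Suc k)" j] unfolding J_def by simp
  qed
  then have "\<exists>Tf. \<forall>k::nat. cmod (Tf k) \<le> 2*pi*(((pi+real (Suc k))^(2*j)+pi^(2*j))/(exp (real (Suc k)) - 1)) \<and>
             (ff j has_integral (J - Re (Tf k)/2)) {0..real (Suc k)}"
    by (rule choice)
  then obtain Tf where Tf: "\<forall>k::nat. cmod (Tf k) \<le> 2*pi*(((pi+real (Suc k))^(2*j)+pi^(2*j))/(exp (real (Suc k)) - 1)) \<and>
             (ff j has_integral (J - Re (Tf k)/2)) {0..real (Suc k)}" by blast
  have Tb: "\<And>k. cmod (Tf k) \<le> 2 * G (real (Suc k))"
    using Tf unfolding G_def by (metis mult.assoc)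
  have Ti: "\<And>k. (ff j has_integral (J - Re (Tf k)/2)) {0..real (Suc k)}"
    using Tf by blast
  define fk where "fk k t = (if t \<in> {0..real (Suc k)} then ff j t else 0)" for k :: nat and t :: real
  have fk_int: "(fk k has_integral (J - Re (Tf k)/2)) {0..}" for k
    unfolding fk_def by (rule has_integral_restrict[THEN iffD2, OF _ Ti]) auto
  have hint: "(\<lambda>t. K * exp (-(1/4)*t)) integrable_on {0..}"
    using integrable_on_cmult_left[OF integrable_on_exp_minus_to_infinity[of "1/4" 0], of K] by simp
  have A1: "\<And>k. fk k integrable_on {0..}" using fk_int by blast
  have A3: "\<And>k x. x \<in> {0..} \<Longrightarrow> norm (fk k x) \<le> K * exp (-(1/4)*x)"
    using K K0 by (auto simp: fk_def)
  have A4: "(\<lambda>k. fk k x) \<longlonglongrightarrow> ff j x" if "x \<in> {0..}" for x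
  proof (rule tendsto_eventually)
    show "\<forall>\<^sub>F k in sequentially. fk k x = ff j x"
      unfolding eventually_sequentially
    proof (intro exI[of _ "nat \<lceil>x\<rceil>"] allI impI)
      fix k assume "nat \<lceil>x\<rceil> \<le> k"
      then have "x \<le> real (Suc k)" by linarith
      then show "fk k x = ff j x" using that by (simp add: fk_def)
    qed
  qed
  note dc = dominated_convergence[where f = fk, OF A1 hint A3 A4]
  have Glim: "((\<lambda>Y. G Y) \<longlongrightarrow> 0) at_top" unfolding G_def by real_asymp
  have Glim2: "(\<lambda>k. G (real (Suc k))) \<longlonglongrightarrow> 0"
    using LIMSEQ_Suc[OF filterlim_compose[OF Glim filterlim_real_sequentially]] by simp
  have Tlim: "(\<lambda>k. Re (Tf k)/2) \<longlonglongrightarrow> 0"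
  proof (rule Lim_null_comparison[OF _ Glim2])
    show "\<forall>\<^sub>F k in sequentially. norm (Re (Tf k)/2) \<le> G (real (Suc k))"
    proof (rule always_eventually, rule allI)
      fix k
      have "norm (Re (Tf k)/2) = \<bar>Re (Tf k)\<bar>/2" by simp
      also have "\<dots> \<le> cmod (Tf k)/2" using abs_Re_le_cmod[of "Tf k"] by simp
      also have "\<dots> \<le> G (real (Suc k))" using Tb[of k] by simp
      finally show "norm (Re (Tf k)/2) \<le> G (real (Suc k))" .
    qed
  qed
  have "(\<lambda>k. integral {0..} (fk k)) \<longlonglongrightarrow> J"
  proof -
    have "(\<lambda>k. J - Re (Tf k)/2) \<longlonglongrightarrow> J - 0" by (intro tendsto_diff tendsto_const Tlim)
    moreover have "integral {0..} (fk k) = J - Re (Tf k)/2" for k using fk_int[of k] by blast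
    ultimately show ?thesis by simp
  qed
  then have "integral {0..} (ff j) = J" using dc(2) LIMSEQ_unique by blast
  then have h0: "(ff j has_integral J) {0..}" using dc(1) by (metis integrable_integral)
  have h1: "(ff j has_integral J) {0<..}"
  proof (rule has_integral_spike_set_eq[THEN iffD1, OF _ _ h0])
    show "negligible {x \<in> {0..} - {0<..}. ff j x \<noteq> 0}"
      by (rule negligible_subset[of "{0}"]) auto
    have "{x \<in> {0<..} - {0..}. ff j x \<noteq> (0::real)} = {}" by auto
    then show "negligible {x \<in> {0<..} - {0..}. ff j x \<noteq> (0::real)}" by (simp only: negligible_empty)
  qed
  then show ?thesis unfolding J_def ff_def .
qed

end
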